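(* Let $\Omega\subset\mathbb{R}^n$ be a bounded open convex set with smooth boundary. If for some $\Lambda>0$ problem $(N_\Lambda)$ admits a nonconstant continuous viscosity solution $u$, then $\Lambda\ge\frac{2}{\operatorname{diam}(\Omega)}$.
   Context: $\operatorname{diam}(\Omega)=\sup_{x,y\in\Omega}|x-y|$. $\nu$ denotes the outer unit normal to $\partial\Omega$, and $\Delta_\infty u=\sum_{i,j=1}^n u_{x_i}u_{x_ix_j}u_{x_j}$. For $\Lambda\ge 0$, problem $(N_\Lambda)$ is $$\min\{|\nabla u|-\Lambda|u|,-\Delta_\infty u\}=0 \text{ in }\{u>0\}\cap\Omega,\quad \max\{\Lambda|u|-|\nabla u|,-\Delta_\infty u\}=0 \text{ in }\{u<0\}\cap\Omega,\quad -\Delta_\infty u=0 \text{ in }\{u=0\}\cap\Omega,\quad \tfrac{\partial u}{\partial\nu}=0 \text{ on }\partial\Omega,$$ understood in the viscosity sense as follows. For $s\in\mathbb{R}$, $\xi\in\mathbb{R}^n$, $X$ a symmetric $n\times n$ matrix, let $F(s,\xi,X)=\min\{|\xi|-\Lambda|s|,-\langle X\xi,\xi\rangle\}$, $G(s,\xi,X)=\max\{\Lambda|s|-|\xi|,-\langle X\xi,\xi\rangle\}$, $H(X)=-\langle X\xi,\xi\rangle$ (evaluated at the same $\xi$). For a function $u$ and point $x_0$, let $E$ denote $F$ if $u(x_0)>0$, $G$ if $u(x_0)<0$, $H$ if $u(x_0)=0$. An upper semicontinuous $u$ on $\overline\Omega$ is a viscosity subsolution if: for every $x_0\in\Omega$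 and $\phi\in C^2(\Omega)$ with $\phi(x_0)=u(x_0)$ and $u(x)<\phi(x)$ for $x\neq x_0$, one has $E(\phi(x_0),\nabla\phi(x_0),\nabla^2\phi(x_0))\le 0$; and for every $x_0\in\partial\Omega$ and $\phi\in C^2(\overline\Omega)$ with the same touching property, $\min\{E(\phi(x_0),\nabla\phi(x_0),\nabla^2\phi(x_0)),\frac{\partial\phi}{\partial\nu}(x_0)\}\le 0$. A lower semicontinuous $u$ is a viscosity supersolution if the same holds with $u(x)>\phi(x)$ for $x\ne x_0$, with "$E\le 0$" replaced by "$E\ge 0$" at interior points and with $\max\{E(\phi(x_0),\nabla\phi(x_0),\nabla^2\phi(x_0)),\frac{\partial\phi}{\partial\nu}(x_0)\}\ge 0$ at boundary points. A continuous $u$ is a viscosity solution if it is both a sub- and a supersolution. *)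

theory Defs
  imports "HOL-Analysis.Analysis"
begin

fun Ck_fun :: "nat \<Rightarrow> ('a::euclidean_space \<Rightarrow> real) \<Rightarrow> bool" where
  "Ck_fun 0 f = continuous_on UNIV f"
| "Ck_fun (Suc k) f = ((\<forall>x. f differentiable (at x)) \<and>
      (\<forall>v. Ck_fun k (\<lambda>x. frechet_derivative f (at x) v)))"

definition smooth_fun :: "('a::euclidean_space \<Rightarrow> real) \<Rightarrow> bool" where
  "smooth_fun f \<longleftrightarrow> (\<forall>k. Ck_fun k f)"

definition grad :: "('a::euclidean_space \<Rightarrow> real) \<Rightarrow> 'a \<Rightarrow> 'a" where
  "grad f x = (\<Sum>b\<in>Basis. frechet_derivative f (at x) b *\<^sub>R b)"

(* rho is a smooth (global) defining function of Omega, i.e. Omega has smooth boundary *)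
definition smooth_defining_fun :: "'a::euclidean_space set \<Rightarrow> ('a \<Rightarrow> real) \<Rightarrow> bool" where
  "smooth_defining_fun \<Omega> \<rho> \<longleftrightarrow> smooth_fun \<rho> \<and> \<Omega> = {x. \<rho> x < 0} \<and>
     (\<forall>x\<in>frontier \<Omega>. grad \<rho> x \<noteq> 0)"

definition outer_normal :: "('a::euclidean_space \<Rightarrow> real) \<Rightarrow> 'a \<Rightarrow> 'a" where
  "outer_normal \<rho> x = grad \<rho> x /\<^sub>R norm (grad \<rho> x)"

(* phi is C^2 on S with gradient g and Hessian H (H x is the derivative of g at x,
   a linear map, so  <H x xi, xi> = xi \<bullet> H x xi); derivatives taken within S *)
definition C2_test :: "'a::euclidean_space set \<Rightarrow> ('a \<Rightarrow> real) \<Rightarrow> ('a \<Rightarrow> 'a) \<Rightarrow> ('a \<Rightarrow> 'a \<Rightarrow> 'a) \<Rightarrow> bool" where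
  "C2_test S \<phi> g H \<longleftrightarrow>
     (\<forall>x\<in>S. (\<phi> has_derivative (\<lambda>h. g x \<bullet> h)) (at x within S)) \<and>
     (\<forall>x\<in>S. (g has_derivative H x) (at x within S)) \<and>
     (\<forall>h. continuous_on S (\<lambda>x. H x h))"

definition opF :: "real \<Rightarrow> real \<Rightarrow> 'a::euclidean_space \<Rightarrow> ('a \<Rightarrow> 'a) \<Rightarrow> real" where
  "opF \<Lambda> s \<xi> X = min (norm \<xi> - \<Lambda> * \<bar>s\<bar>) (- (\<xi> \<bullet> X \<xi>))"

definition opG :: "real \<Rightarrow> real \<Rightarrow> 'a::euclidean_space \<Rightarrow> ('a \<Rightarrow> 'a) \<Rightarrow> real" where
  "opG \<Lambda> s \<xi> X = max (\<Lambda> * \<bar>s\<bar> - norm \<xi>) (- (\<xi> \<bullet> X \<xi>))"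

definition opH :: "'a::euclidean_space \<Rightarrow> ('a \<Rightarrow> 'a) \<Rightarrow> real" where
  "opH \<xi> X = - (\<xi> \<bullet> X \<xi>)"

definition opE :: "real \<Rightarrow> real \<Rightarrow> 'a::euclidean_space \<Rightarrow> ('a \<Rightarrow> 'a) \<Rightarrow> real" where
  "opE \<Lambda> s \<xi> X = (if s > 0 then opF \<Lambda> s \<xi> X else if s < 0 then opG \<Lambda> s \<xi> X else opH \<xi> X)"

definition visc_sub :: "real \<Rightarrow> 'a::euclidean_space set \<Rightarrow> ('a \<Rightarrow> 'a) \<Rightarrow> ('a \<Rightarrow> real) \<Rightarrow> bool" where
  "visc_sub \<Lambda> \<Omega> \<nu> u \<longleftrightarrow>
    (\<forall>x0\<in>\<Omega>. \<forall>\<phi> g H. C2_test \<Omega> \<phi> g H \<and> \<phi> x0 = u x0 \<and> (\<forall>x\<in>\<Omega> - {x0}. u x < \<phi> x)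
        \<longrightarrow> opE \<Lambda> (\<phi> x0) (g x0) (H x0) \<le> 0) \<and>
    (\<forall>x0\<in>frontier \<Omega>. \<forall>\<phi> g H. C2_test (closure \<Omega>) \<phi> g H \<and> \<phi> x0 = u x0 \<and>
        (\<forall>x\<in>closure \<Omega> - {x0}. u x < \<phi> x)
        \<longrightarrow> min (opE \<Lambda> (\<phi> x0) (g x0) (H x0)) (g x0 \<bullet> \<nu> x0) \<le> 0)"

definition visc_super :: "real \<Rightarrow> 'a::euclidean_space set \<Rightarrow> ('a \<Rightarrow> 'a) \<Rightarrow> ('a \<Rightarrow> real) \<Rightarrow> bool" where
  "visc_super \<Lambda> \<Omega> \<nu> u \<longleftrightarrow>
    (\<forall>x0\<in>\<Omega>. \<forall>\<phi> g H. C2_test \<Omega> \<phi> g H \<and> \<phi> x0 = u x0 \<and> (\<forall>x\<in>\<Omega> - {x0}. u x > \<phi> x)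
        \<longrightarrow> opE \<Lambda> (\<phi> x0) (g x0) (H x0) \<ge> 0) \<and>
    (\<forall>x0\<in>frontier \<Omega>. \<forall>\<phi> g H. C2_test (closure \<Omega>) \<phi> g H \<and> \<phi> x0 = u x0 \<and>
        (\<forall>x\<in>closure \<Omega> - {x0}. u x > \<phi> x)
        \<longrightarrow> max (opE \<Lambda> (\<phi> x0) (g x0) (H x0)) (g x0 \<bullet> \<nu> x0) \<ge> 0)"

definition visc_sol :: "real \<Rightarrow> 'a::euclidean_space set \<Rightarrow> ('a \<Rightarrow> 'a) \<Rightarrow> ('a \<Rightarrow> real) \<Rightarrow> bool" where
  "visc_sol \<Lambda> \<Omega> \<nu> u \<longleftrightarrow> continuous_on (closure \<Omega>) u \<and> visc_sub \<Lambda> \<Omega> \<nu> u \<and> visc_super \<Lambda> \<Omega> \<nu> u"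

end

theory Submission imports Defs "HOL-Analysis.Analysis" begin


lemma DERIV_piecewise:
  fixes f g f' g' :: "real \<Rightarrow> real"
  assumes df: "\<And>t. DERIV f t :> f' t" and dg: "\<And>t. t \<ge> a \<Longrightarrow> DERIV g t :> g' t"
    and e0: "f a = g a" and e1: "f' a = g' a"
  shows "DERIV (\<lambda>t. if t \<le> a then f t else g t) t :> (if t \<le> a then f' t else g' t)"
proof -
  have cl: "closure {..a} = {..a}" "closure {a<..} = {a..}" by auto
  have "((\<lambda>t. if t \<in> {..a} then f t else g t) has_derivative
      (if t \<in> {..a} then (\<lambda>h. f' t * h) else (\<lambda>h. g' t * h))) (at t within ({..a} \<union> {a<..}))"
  proof (rule has_derivative_If_within_closures[where f'="\<lambda>t h. f' t * h" and g'="\<lambda>t h. g' t * h"])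
    fix x assume "x \<in> {..a} \<union> (closure {..a} \<inter> closure {a<..})"
    show "(f has_derivative (\<lambda>h. f' x * h)) (at x within {..a} \<union> (closure {..a} \<inter> closure {a<..}))"
      using df[of x] by (auto simp add: has_field_derivative_def intro: has_derivative_at_withinI)
  next
    fix x assume "x \<in> {a<..} \<union> (closure {..a} \<inter> closure {a<..})"
    then have "x \<ge> a" by (auto simp: cl)
    show "(g has_derivative (\<lambda>h. g' x * h)) (at x within {a<..} \<union> (closure {..a} \<inter> closure {a<..}))"
      using dg[OF \<open>x \<ge> a\<close>] by (auto simp add: has_field_derivative_def intro: has_derivative_at_withinI)
  next
    fix x assume "x \<in> closure {..a}" "x \<in> closure {a<..}"
    then have "x = a" by (auto simp: cl)
    then show "f x = g x" "(\<lambda>h. f' x * h) = (\<lambda>h. g' x * h)" using e0 e1 by auto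
  qed auto
  moreover have "{..a} \<union> {a<..} = (UNIV::real set)" by auto
  ultimately show ?thesis
    by (auto simp: has_field_derivative_def split: if_splits)
qed


definition sqd :: "real \<Rightarrow> real \<Rightarrow> real" where
  "sqd d t = (if t \<le> d\<^sup>2 then d + (t - d\<^sup>2)/(2*d) - (t - d\<^sup>2)\<^sup>2/(8*d^3) else sqrt t)"
definition sqd1 :: "real \<Rightarrow> real \<Rightarrow> real" where
  "sqd1 d t = (if t \<le> d\<^sup>2 then 1/(2*d) - (t - d\<^sup>2)/(4*d^3) else 1/(2 * sqrt t))"
definition sqd2 :: "real \<Rightarrow> real \<Rightarrow> real" where
  "sqd2 d t = (if t \<le> d\<^sup>2 then -1/(4*d^3) else -1/(4 * t * sqrt t))"

lemma sqd_deriv: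
  assumes d: "d > 0"
  shows "DERIV (sqd d) t :> sqd1 d t"
proof -
  have "DERIV (\<lambda>t. if t \<le> d\<^sup>2 then d + (t - d\<^sup>2)/(2*d) - (t - d\<^sup>2)\<^sup>2/(8*d^3) else sqrt t) t
      :> (if t \<le> d\<^sup>2 then 1/(2*d) - (t - d\<^sup>2)/(4*d^3) else 1/(2 * sqrt t))"
  proof (rule DERIV_piecewise)
    fix t :: real
    show "DERIV (\<lambda>t. d + (t - d\<^sup>2)/(2*d) - (t - d\<^sup>2)\<^sup>2/(8*d^3)) t :> 1/(2*d) - (t - d\<^sup>2)/(4*d^3)"
      using d by (auto intro!: derivative_eq_intros simp: field_simps power2_eq_square power3_eq_cube)
  next
    fix t :: real assume "d\<^sup>2 \<le> t"
    then have "t > 0" using d by (smt (verit) zero_less_power)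
    then show "DERIV sqrt t :> 1/(2 * sqrt t)"
      by (auto intro!: derivative_eq_intros simp: field_simps)
  qed (use d in \<open>auto simp: power2_eq_square\<close>)
  then show ?thesis unfolding sqd_def[abs_def] sqd1_def .
qed

lemma sqd1_deriv:
  assumes d: "d > 0"
  shows "DERIV (sqd1 d) t :> sqd2 d t"
proof -
  have "DERIV (\<lambda>t. if t \<le> d\<^sup>2 then 1/(2*d) - (t - d\<^sup>2)/(4*d^3) else 1/(2 * sqrt t)) t
      :> (if t \<le> d\<^sup>2 then -1/(4*d^3) else -1/(4 * t * sqrt t))"
  proof (rule DERIV_piecewise)
    fix t :: real
    show "DERIV (\<lambda>t. 1/(2*d) - (t - d\<^sup>2)/(4*d^3)) t :> -1/(4*d^3)"
      using d by (auto intro!: derivative_eq_intros simp: field_simps)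
  next
    fix t :: real assume "d\<^sup>2 \<le> t"
    then have "t > 0" using d by (smt (verit) zero_less_power)
    then show "DERIV (\<lambda>t. 1/(2 * sqrt t)) t :> -1/(4 * t * sqrt t)"
      by (auto intro!: derivative_eq_intros simp: field_simps power2_eq_square)
  qed (use d in \<open>auto simp: power2_eq_square power3_eq_cube\<close>)
  then show ?thesis unfolding sqd1_def[abs_def] sqd2_def .
qed

lemma sqd2_cont:
  assumes d: "d > 0"
  shows "continuous_on UNIV (sqd2 d)"
proof -
  have "continuous_on UNIV (\<lambda>t. if id t \<le> d\<^sup>2 then -1/(4*d^3) else -1/(4 * t * sqrt t))"
  proof (rule continuous_on_cases_le)
    show "continuous_on {t \<in> UNIV. d\<^sup>2 \<le> id t} (\<lambda>t. -1/(4 * t * sqrt t))"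
    proof -
      have pos: "\<And>t. d\<^sup>2 \<le> t \<Longrightarrow> t > 0" using d by (smt (verit) zero_less_power)
      show ?thesis by (intro continuous_intros) (auto dest: pos)
    qed
  qed (use d in \<open>auto intro!: continuous_intros simp: power2_eq_square power3_eq_cube\<close>)
  then show ?thesis unfolding sqd2_def[abs_def] by simp
qed

lemma sqd_ge:
  assumes d: "d > 0" and t: "t \<ge> 0"
  shows "sqrt t \<le> sqd d t"
proof (cases "t \<le> d\<^sup>2")
  case True
  define v where "v = sqrt t"
  have v0: "v \<ge> 0" and tv: "t = v\<^sup>2" using t by (auto simp: v_def)
  have vd: "v \<le> d" using True d v0 tv by (simp add: power2_le_iff_abs_le)
  have "8*d^3 * (d + (t - d\<^sup>2)/(2*d) - (t - d\<^sup>2)\<^sup>2/(8*d^3) - v) = (v - d)\<^sup>2 * (d - v) * (3*d + v)"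
    using d unfolding tv by (simp add: field_simps power2_eq_square power3_eq_cube)
  also have "\<dots> \<ge> 0" using vd v0 d by simp
  finally have "d + (t - d\<^sup>2)/(2*d) - (t - d\<^sup>2)\<^sup>2/(8*d^3) - v \<ge> 0"
    using d by (simp add: zero_le_mult_iff)
  then show ?thesis using True by (simp add: sqd_def v_def)
qed (simp add: sqd_def)

lemma sqd_eq: "t > d\<^sup>2 \<Longrightarrow> sqd d t = sqrt t \<and> sqd1 d t = 1/(2 * sqrt t) \<and> sqd2 d t = -1/(4 * t * sqrt t)"
  by (simp add: sqd_def sqd1_def sqd2_def)


lemma q_deriv: "((\<lambda>x. (x - z) \<bullet> (x - z)) has_derivative (\<lambda>h. 2 * ((x - z) \<bullet> h))) (at x within S)"
  for z :: "'a::euclidean_space"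
proof -
  have "((\<lambda>x. (x - z) \<bullet> (x - z)) has_derivative (\<lambda>h. (x - z) \<bullet> h + h \<bullet> (x - z))) (at x within S)"
    by (auto intro!: derivative_eq_intros)
  then show ?thesis by (simp add: inner_commute)
qed

lemma radial_C2:
  fixes z :: "'a::euclidean_space" and F F1 F2 :: "real \<Rightarrow> real"
  assumes d1: "\<And>t. DERIV F t :> F1 t" and d2: "\<And>t. DERIV F1 t :> F2 t" and c2: "continuous_on UNIV F2"
  shows "C2_test S (\<lambda>x. F ((x-z)\<bullet>(x-z))) (\<lambda>x. (2 * F1 ((x-z)\<bullet>(x-z))) *\<^sub>R (x - z))
           (\<lambda>x h. (2 * F1 ((x-z)\<bullet>(x-z))) *\<^sub>R h + (4 * F2 ((x-z)\<bullet>(x-z)) * ((x-z)\<bullet>h)) *\<^sub>R (x - z))"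
  unfolding C2_test_def
proof (intro conjI ballI allI)
  fix x assume "x \<in> S"
  have "((\<lambda>x. F ((x-z)\<bullet>(x-z))) has_derivative (\<lambda>h. 2 * ((x - z) \<bullet> h) * F1 ((x-z)\<bullet>(x-z)))) (at x within S)"
    by (rule DERIV_compose_FDERIV[OF d1 q_deriv])
  then show "((\<lambda>x. F ((x-z)\<bullet>(x-z))) has_derivative (\<lambda>h. ((2 * F1 ((x-z)\<bullet>(x-z))) *\<^sub>R (x - z)) \<bullet> h)) (at x within S)"
    by (rule has_derivative_eq_rhs) (auto simp: algebra_simps)
next
  fix x assume "x \<in> S"
  have a: "((\<lambda>x. 2 * F1 ((x-z)\<bullet>(x-z))) has_derivative (\<lambda>h. 2 * (2 * ((x - z) \<bullet> h) * F2 ((x-z)\<bullet>(x-z))))) (at x within S)"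
    by (intro has_derivative_mult_right DERIV_compose_FDERIV[OF d2 q_deriv])
  have b: "((\<lambda>x. x - z) has_derivative (\<lambda>h. h)) (at x within S)"
    by (auto intro!: derivative_eq_intros)
  show "((\<lambda>x. (2 * F1 ((x-z)\<bullet>(x-z))) *\<^sub>R (x - z)) has_derivative
     (\<lambda>h. (2 * F1 ((x-z)\<bullet>(x-z))) *\<^sub>R h + (4 * F2 ((x-z)\<bullet>(x-z)) * ((x-z)\<bullet>h)) *\<^sub>R (x - z))) (at x within S)"
    by (rule has_derivative_eq_rhs[OF has_derivative_scaleR[OF a b]]) (auto simp: algebra_simps)
next
  fix h
  have cF1: "continuous_on UNIV F1"
    using d2 by (meson DERIV_isCont continuous_at_imp_continuous_on)
  have cF1': "continuous_on S (\<lambda>x. F1 ((x-z)\<bullet>(x-z)))"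
    by (rule continuous_on_compose2[OF cF1]) (auto intro!: continuous_intros)
  have cF2': "continuous_on S (\<lambda>x. F2 ((x-z)\<bullet>(x-z)))"
    by (rule continuous_on_compose2[OF c2]) (auto intro!: continuous_intros)
  show "continuous_on S (\<lambda>x. (2 * F1 ((x-z)\<bullet>(x-z))) *\<^sub>R h + (4 * F2 ((x-z)\<bullet>(x-z)) * ((x-z)\<bullet>h)) *\<^sub>R (x - z))"
    by (intro continuous_intros cF1' cF2')
qed

lemma C2_add:
  assumes "C2_test S f1 g1 H1" "C2_test S f2 g2 H2"
  shows "C2_test S (\<lambda>x. f1 x + f2 x) (\<lambda>x. g1 x + g2 x) (\<lambda>x h. H1 x h + H2 x h)"
  using assms unfolding C2_test_def
  by (auto intro!: derivative_eq_intros continuous_intros simp: inner_add_left)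

lemma C2_const:
  assumes "C2_test S f g H"
  shows "C2_test S (\<lambda>x. c + f x) g H"
  using assms unfolding C2_test_def
  by (auto intro!: derivative_eq_intros)

lemma C2_neg:
  assumes "C2_test S f g H"
  shows "C2_test S (\<lambda>x. - f x) (\<lambda>x. - g x) (\<lambda>x h. - H x h)"
  using assms unfolding C2_test_def
  by (auto intro!: derivative_eq_intros continuous_intros)


lemma opE_neg:
  assumes "linear X"
  shows "opE \<Lambda> (-s) (-\<xi>) (\<lambda>h. - X h) = - opE \<Lambda> s \<xi> X"
proof -
  have "X (-\<xi>) = - X \<xi>" using assms by (simp add: linear_neg)
  then have e: "- ((-\<xi>) \<bullet> (- X (-\<xi>))) = \<xi> \<bullet> X \<xi>" by simp
  have "s > 0 \<or> s < 0 \<or> s = 0" by linarith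
  then show ?thesis
  proof (elim disjE)
    assume "s > 0" then show ?thesis unfolding opE_def opF_def opG_def opH_def e
      by (simp add: max_def min_def)
  next
    assume "s < 0" then show ?thesis unfolding opE_def opF_def opG_def opH_def e
      by (simp add: max_def min_def)
  qed (use \<open>X (-\<xi>) = - X \<xi>\<close> in \<open>simp add: opE_def opH_def\<close>)
qed

lemma C2_linear: "C2_test S \<phi> g H \<Longrightarrow> x \<in> S \<Longrightarrow> linear (H x)"
  unfolding C2_test_def using has_derivative_linear by blast

lemma super_neg_sub:
  assumes "visc_super \<Lambda> \<Omega> \<nu> u"
  shows "visc_sub \<Lambda> \<Omega> \<nu> (\<lambda>x. - u x)"
  unfolding visc_sub_def
proof (intro conjI ballI allI impI)
  fix x0 \<phi> g H
  assume x0: "x0 \<in> \<Omega>" and h: "C2_test \<Omega> \<phi> g H \<and> \<phi> x0 = - u x0 \<and> (\<forall>x\<in>\<Omega> - {x0}. - u x < \<phi> x)"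
  have lin: "linear (H x0)" using h x0 C2_linear by blast
  have "opE \<Lambda> ((\<lambda>x. - \<phi> x) x0) ((\<lambda>x. - g x) x0) ((\<lambda>x h. - H x h) x0) \<ge> 0"
  proof -
    have A: "\<forall>x0\<in>\<Omega>. \<forall>\<phi> g H. C2_test \<Omega> \<phi> g H \<and> \<phi> x0 = u x0 \<and> (\<forall>x\<in>\<Omega> - {x0}. u x > \<phi> x)
        \<longrightarrow> opE \<Lambda> (\<phi> x0) (g x0) (H x0) \<ge> 0" using assms unfolding visc_super_def by blast
    have "\<forall>x\<in>\<Omega> - {x0}. u x > - \<phi> x" using h by force
    then show ?thesis using A[rule_format, OF x0, of "\<lambda>x. - \<phi> x" "\<lambda>x. - g x" "\<lambda>x h. - H x h"] h C2_neg[of \<Omega> \<phi> g H] by auto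
  qed
  then show "opE \<Lambda> (\<phi> x0) (g x0) (H x0) \<le> 0" using opE_neg[OF lin] by simp
next
  fix x0 \<phi> g H
  assume x0: "x0 \<in> frontier \<Omega>" and h: "C2_test (closure \<Omega>) \<phi> g H \<and> \<phi> x0 = - u x0 \<and> (\<forall>x\<in>closure \<Omega> - {x0}. - u x < \<phi> x)"
  have x0': "x0 \<in> closure \<Omega>" using x0 by (simp add: frontier_def)
  have lin: "linear (H x0)" using h x0' C2_linear by blast
  have "max (opE \<Lambda> ((\<lambda>x. - \<phi> x) x0) ((\<lambda>x. - g x) x0) ((\<lambda>x h. - H x h) x0)) ((\<lambda>x. - g x) x0 \<bullet> \<nu> x0) \<ge> 0"
  proof -
    have A: "\<forall>x0\<in>frontier \<Omega>. \<forall>\<phi> g H. C2_test (closure \<Omega>) \<phi> g H \<and> \<phi> x0 = u x0 \<and>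
        (\<forall>x\<in>closure \<Omega> - {x0}. u x > \<phi> x)
        \<longrightarrow> max (opE \<Lambda> (\<phi> x0) (g x0) (H x0)) (g x0 \<bullet> \<nu> x0) \<ge> 0" using assms unfolding visc_super_def by blast
    have "\<forall>x\<in>closure \<Omega> - {x0}. u x > - \<phi> x" using h by force
    then show ?thesis using A[rule_format, OF x0, of "\<lambda>x. - \<phi> x" "\<lambda>x. - g x" "\<lambda>x h. - H x h"] h C2_neg[of "closure \<Omega>" \<phi> g H] by auto
  qed
  then show "min (opE \<Lambda> (\<phi> x0) (g x0) (H x0)) (g x0 \<bullet> \<nu> x0) \<le> 0" using opE_neg[OF lin] by simp
qed


lemma grad_inner:
  assumes "(f has_derivative D) (at x)"
  shows "grad f x \<bullet> v = D v"
proof -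
  have lin: "linear D" using assms has_derivative_linear by blast
  have fd: "frechet_derivative f (at x) = D"
    using frechet_derivative_at[OF assms] by simp
  have "grad f x \<bullet> v = (\<Sum>b\<in>Basis. D b * (b \<bullet> v))"
    unfolding grad_def fd by (simp add: inner_sum_left)
  also have "\<dots> = D (\<Sum>b\<in>Basis. (v \<bullet> b) *\<^sub>R b)"
    by (simp add: linear_sum[OF lin] linear_cmul[OF lin] inner_commute mult.commute)
  also have "\<dots> = D v" by (simp add: euclidean_representation)
  finally show ?thesis .
qed

lemma normal_pos:
  fixes \<Omega> :: "'a::euclidean_space set"
  assumes op: "open \<Omega>" and cv: "convex \<Omega>" and sd: "smooth_defining_fun \<Omega> \<rho>"
    and z: "z \<in> \<Omega>" and x0: "x0 \<in> frontier \<Omega>"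
  shows "(x0 - z) \<bullet> outer_normal \<rho> x0 > 0"
proof -
  have "Ck_fun (Suc 0) \<rho>" using sd unfolding smooth_defining_fun_def smooth_fun_def by blast
  then have "\<rho> differentiable (at x0)" by simp
  then obtain D where D: "(\<rho> has_derivative D) (at x0)"
    using frechet_derivative_works by blast
  have lin: "linear D" using D has_derivative_linear by blast
  define G where "G = grad \<rho> x0"
  have G0: "G \<noteq> 0" using sd x0 unfolding smooth_defining_fun_def G_def by blast
  have GD: "\<And>v. G \<bullet> v = D v" unfolding G_def by (rule grad_inner[OF D])
  have Om: "\<Omega> = {x. \<rho> x < 0}" using sd unfolding smooth_defining_fun_def by blast
  have x0n: "x0 \<notin> \<Omega>" using x0 op by (simp add: frontier_def interior_open)
  have x0c: "x0 \<in> closure \<Omega>" using x0 by (simp add: frontier_def)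
  have r0: "\<rho> x0 \<ge> 0" using x0n Om by auto
  obtain e where e: "e > 0" "ball z e \<subseteq> \<Omega>" using op z open_contains_ball by blast
  define y where "y = z + (e/2) *\<^sub>R (G /\<^sub>R norm G)"
  have "dist z y < e" using e G0 by (simp add: y_def dist_norm)
  then have yO: "y \<in> \<Omega>" using e by auto
  have seg: "x0 + t *\<^sub>R (y - x0) \<in> \<Omega>" if "0 < t" "t < 1" for t
  proof -
    have "open_segment y x0 \<subseteq> interior \<Omega>"
      by (rule in_interior_closure_convex_segment[OF cv]) (use yO op x0c in \<open>auto simp: interior_open\<close>)
    moreover have "x0 + t *\<^sub>R (y - x0) \<in> open_segment y x0"
      unfolding in_segment using that yO x0n
      by (intro conjI exI[of _ "1 - t"]) (auto simp: algebra_simps)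
    ultimately show ?thesis using op by (auto simp: interior_open)
  qed
  define f where "f t = \<rho> (x0 + t *\<^sub>R (y - x0))" for t
  have "((\<lambda>t. x0 + t *\<^sub>R (y - x0)) has_derivative (\<lambda>h. h *\<^sub>R (y - x0))) (at 0)"
    by (auto intro!: derivative_eq_intros)
  moreover have "(\<rho> has_derivative D) (at (x0 + 0 *\<^sub>R (y - x0)))" using D by simp
  ultimately have "(f has_derivative (\<lambda>h. D (h *\<^sub>R (y - x0)))) (at 0)"
    unfolding f_def by (rule has_derivative_compose)
  then have "DERIV f 0 :> D (y - x0)"
    unfolding has_field_derivative_def
    by (rule has_derivative_eq_rhs) (auto simp: linear_cmul[OF lin] mult.commute)
  have Dle: "D (y - x0) \<le> 0"
  proof (rule ccontr)
    assume "\<not> D (y - x0) \<le> 0"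
    then obtain d where d: "d > 0" "\<forall>h>0. h < d \<longrightarrow> f 0 < f (0 + h)"
      using DERIV_pos_inc_right[OF \<open>DERIV f 0 :> D (y - x0)\<close>] by auto
    define h where "h = min (d/2) (1/2)"
    have "f 0 < f h" using d by (auto simp: h_def)
    moreover have "f h < 0" using seg[of h] Om d(1) by (auto simp: h_def f_def)
    moreover have "f 0 = \<rho> x0" by (simp add: f_def)
    ultimately show False using r0 by linarith
  qed
  have "G \<bullet> (y - x0) = G \<bullet> (z - x0) + (e/2) * norm G"
    using G0 by (simp add: y_def inner_diff_right inner_add_right power2_norm_eq_inner[symmetric] power2_eq_square)
  then have "G \<bullet> (x0 - z) \<ge> (e/2) * norm G"
    using Dle GD[of "y - x0"] by (simp add: inner_diff_right)
  moreover have "(e/2) * norm G > 0" using e G0 by simp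
  ultimately have "G \<bullet> (x0 - z) > 0" by linarith
  then show ?thesis
    unfolding outer_normal_def G_def[symmetric] using G0
    by (simp add: inner_commute)
qed


lemma opE_pos:
  assumes "\<Lambda> \<ge> 0" "norm \<xi> > \<Lambda> * P" "s \<le> P" "\<xi> \<bullet> X \<xi> < 0"
  shows "opE \<Lambda> s \<xi> X > 0"
proof -
  have "s > 0 \<Longrightarrow> \<Lambda> * \<bar>s\<bar> \<le> \<Lambda> * P" using assms by (simp add: mult_left_mono)
  then show ?thesis using assms unfolding opE_def opF_def opG_def opH_def by auto
qed

lemma quad_calc:
  fixes v :: "'a::real_inner"
  assumes "v \<bullet> v = r\<^sup>2" "r > 0"
  shows "(a *\<^sub>R v) \<bullet> (a *\<^sub>R (a *\<^sub>R v) - (k / r^3 * (v \<bullet> (a *\<^sub>R v))) *\<^sub>R v) = a * a * r\<^sup>2 * (a - k / r)"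
  using assms by (simp add: inner_diff_right algebra_simps power2_eq_square power3_eq_cube field_simps)

lemma lip_core:
  fixes \<Omega> :: "'a::euclidean_space set"
  assumes bd: "bounded \<Omega>" and op: "open \<Omega>" and cv: "convex \<Omega>" and sd: "smooth_defining_fun \<Omega> \<rho>"
    and L: "\<Lambda> \<ge> 0" and cu: "continuous_on (closure \<Omega>) u"
    and sub: "visc_sub \<Lambda> \<Omega> (outer_normal \<rho>) u"
    and P: "\<forall>x\<in>closure \<Omega>. u x \<le> P" and P0: "P \<ge> 0" and P0: "P \<ge> 0"
    and z: "z \<in> \<Omega>" and k: "k > \<Lambda> * P" and x: "x \<in> closure \<Omega>"
  shows "u x \<le> u z + k * norm (x - z)"
proof -
  define K where "K = closure \<Omega>"
  have cK: "compact K" using bd by (simp add: K_def compact_closure)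
  have zK: "z \<in> K" using z closure_subset by (auto simp: K_def)
  define R where "R = diameter K"
  have Rb: "norm (y - z) \<le> R" if "y \<in> K" for y
    using diameter_bounded_bound[of K y z] that zK cK compact_imp_bounded by (auto simp: R_def dist_norm)
  have R0: "R \<ge> 0" using Rb[OF zK] by simp
  have LP0: "\<Lambda> * P \<ge> 0" using L P0 by simp
  have k0: "k > 0" using k LP0 by linarith
  define \<epsilon> where "\<epsilon> = (k - \<Lambda> * P) / (4 * (R + 1))"
  have eps: "\<epsilon> > 0" using k R0 by (simp add: \<epsilon>_def)
  have slope: "k - 2 * \<epsilon> * r > \<Lambda> * P" if "0 \<le> r" "r \<le> R" for r
  proof -
    have "2 * \<epsilon> * r \<le> 2 * \<epsilon> * R" using that eps by simp
    also have "\<dots> = (k - \<Lambda> * P) * (R / (2 * (R + 1)))" using R0 by (simp add: \<epsilon>_def field_simps)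
    also have "\<dots> < (k - \<Lambda> * P) * 1" using k R0 by (intro mult_strict_left_mono) (auto simp: field_simps)
    finally show ?thesis by simp
  qed
  define C where "C y = k * norm (y - z) - \<epsilon> * (norm (y - z))\<^sup>2" for y
  define w where "w y = u y - C y" for y
  have cw: "continuous_on K w" unfolding w_def C_def K_def
    by (intro continuous_intros cu)
  obtain x0 where x0K: "x0 \<in> K" and x0max: "\<forall>y\<in>K. w y \<le> w x0"
    using continuous_attains_sup[OF cK _ cw] zK by blast
  define c where "c = w x0"
  have wz: "w z = u z" by (simp add: w_def C_def)
  have "c \<le> u z"
  proof (rule ccontr)
    assume "\<not> c \<le> u z"
    then have cz: "c > u z" by simp
    have x0z: "x0 \<noteq> z" using cz wz by (auto simp: c_def)
    define r0 where "r0 = norm (x0 - z)"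
    have r0p: "r0 > 0" using x0z by (simp add: r0_def)
    have r0R: "r0 \<le> R" using Rb[OF x0K] by (simp add: r0_def)
    define d where "d = r0 / 2"
    have d0: "d > 0" using r0p by (simp add: d_def)
    define F where "F t = k * sqd d t - \<epsilon> * t" for t
    define F1 where "F1 t = k * sqd1 d t - \<epsilon>" for t
    define F2 where "F2 t = k * sqd2 d t" for t
    have dF: "DERIV F t :> F1 t" for t
      unfolding F_def F1_def by (auto intro!: derivative_eq_intros sqd_deriv[OF d0])
    have dF1: "DERIV F1 t :> F2 t" for t
      unfolding F1_def F2_def by (auto intro!: derivative_eq_intros sqd1_deriv[OF d0])
    have cF2: "continuous_on UNIV F2" unfolding F2_def by (intro continuous_intros sqd2_cont[OF d0])
    define Q where "Q t = t\<^sup>2" for t :: real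
    define Q1 where "Q1 t = 2 * t" for t :: real
    define Q2 where "Q2 t = (2::real)" for t :: real
    have dQ: "DERIV Q t :> Q1 t" for t unfolding Q_def Q1_def by (auto intro!: derivative_eq_intros)
    have dQ1: "DERIV Q1 t :> Q2 t" for t unfolding Q1_def Q2_def by (auto intro!: derivative_eq_intros)
    have cQ2: "continuous_on UNIV Q2" unfolding Q2_def by simp
    define \<phi> where "\<phi> y = c + (F ((y-z)\<bullet>(y-z)) + Q ((y-x0)\<bullet>(y-x0)))" for y
    define g where "g y = (2 * F1 ((y-z)\<bullet>(y-z))) *\<^sub>R (y - z) + (2 * Q1 ((y-x0)\<bullet>(y-x0))) *\<^sub>R (y - x0)" for y
    define H where "H y h = ((2 * F1 ((y-z)\<bullet>(y-z))) *\<^sub>R h + (4 * F2 ((y-z)\<bullet>(y-z)) * ((y-z)\<bullet>h)) *\<^sub>R (y - z))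
       + ((2 * Q1 ((y-x0)\<bullet>(y-x0))) *\<^sub>R h + (4 * Q2 ((y-x0)\<bullet>(y-x0)) * ((y-x0)\<bullet>h)) *\<^sub>R (y - x0))" for y h
    have C2: "C2_test S \<phi> g H" for S
      unfolding \<phi>_def g_def H_def
      by (intro C2_const C2_add radial_C2 dF dF1 cF2 dQ dQ1 cQ2)
    have qz0: "(x0-z)\<bullet>(x0-z) = r0\<^sup>2" by (simp add: r0_def power2_norm_eq_inner)
    have gt: "r0\<^sup>2 > d\<^sup>2" using r0p by (simp add: d_def power2_eq_square)
    have sq: "sqrt (r0\<^sup>2) = r0" using r0p by simp
    have Fx0: "F (r0\<^sup>2) = C x0" using sqd_eq[OF gt] sq by (simp add: F_def C_def r0_def)
    have phix0: "\<phi> x0 = u x0" by (simp add: \<phi>_def qz0 Fx0 Q_def c_def w_def)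
    have CF: "C y \<le> F ((y-z)\<bullet>(y-z))" for y
    proof -
      have "norm (y - z) = sqrt ((y-z)\<bullet>(y-z))" by (simp add: norm_eq_sqrt_inner)
      also have "\<dots> \<le> sqd d ((y-z)\<bullet>(y-z))" by (rule sqd_ge[OF d0]) simp
      finally have "k * norm (y - z) \<le> k * sqd d ((y-z)\<bullet>(y-z))"
        using k0 by (simp add: mult_left_mono)
      then show ?thesis by (simp add: C_def F_def power2_norm_eq_inner)
    qed
    have touch: "u y < \<phi> y" if "y \<in> K" "y \<noteq> x0" for y
    proof -
      have "u y - C y \<le> c" using x0max that by (simp add: w_def c_def)
      moreover have "Q ((y-x0)\<bullet>(y-x0)) > 0" using that by (simp add: Q_def)
      ultimately show ?thesis using CF[of y] by (simp add: \<phi>_def)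
    qed
    define \<alpha> where "\<alpha> = k / r0 - 2 * \<epsilon>"
    have slope0: "k - 2 * \<epsilon> * r0 > \<Lambda> * P" using slope[of r0] r0p r0R by simp
    have kpos: "k - 2 * \<epsilon> * r0 > 0" using slope0 LP0 by linarith
    have alpha_pos: "\<alpha> > 0" using kpos r0p by (simp add: \<alpha>_def field_simps)
    have F1x0: "F1 (r0\<^sup>2) = k / (2 * r0) - \<epsilon>" using sqd_eq[OF gt] sq by (simp add: F1_def)
    have F2x0: "F2 (r0\<^sup>2) = - k / (4 * r0^3)" using sqd_eq[OF gt] sq
      by (simp add: F2_def power2_eq_square power3_eq_cube)
    have twoF1: "2 * F1 (r0\<^sup>2) = \<alpha>" using r0p by (simp add: F1x0 \<alpha>_def field_simps)
    have gx0: "g x0 = \<alpha> *\<^sub>R (x0 - z)"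
      by (simp add: g_def qz0 twoF1 Q1_def)
    have Hx0: "H x0 h = \<alpha> *\<^sub>R h - (k / r0^3 * ((x0 - z) \<bullet> h)) *\<^sub>R (x0 - z)" for h
    proof -
      have "4 * F2 (r0\<^sup>2) * ((x0 - z) \<bullet> h) = - (k / r0^3 * ((x0 - z) \<bullet> h))"
        by (simp add: F2x0)
      then show ?thesis by (simp add: H_def qz0 twoF1 Q1_def)
    qed
    have ngx: "norm (g x0) = k - 2 * \<epsilon> * r0"
    proof -
      have "norm (g x0) = \<alpha> * r0" using alpha_pos by (simp add: gx0 r0_def)
      also have "\<dots> = k - 2 * \<epsilon> * r0" using r0p by (simp add: \<alpha>_def field_simps)
      finally show ?thesis .
    qed
    have "g x0 \<bullet> H x0 (g x0) = \<alpha> * \<alpha> * r0\<^sup>2 * (\<alpha> - k / r0)"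
      unfolding gx0 Hx0 by (rule quad_calc[OF qz0 r0p])
    also have "\<dots> = - (2 * \<epsilon> * (\<alpha> * \<alpha> * r0\<^sup>2))" by (simp add: \<alpha>_def algebra_simps)
    also have "\<dots> < 0" using eps alpha_pos r0p by simp
    finally have neg: "g x0 \<bullet> H x0 (g x0) < 0" .
    have ux0: "\<phi> x0 \<le> P" using phix0 P x0K by (simp add: K_def)
    have Epos: "opE \<Lambda> (\<phi> x0) (g x0) (H x0) > 0"
    proof -
      have nP: "norm (g x0) > \<Lambda> * P" using ngx slope0 by simp
      show ?thesis by (rule opE_pos[where \<xi>="g x0" and X="H x0", OF L nP ux0 neg])
    qed
    show False
    proof (cases "x0 \<in> \<Omega>")
      case True
      have "opE \<Lambda> (\<phi> x0) (g x0) (H x0) \<le> 0"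
        using sub True C2[of \<Omega>] phix0 touch closure_subset unfolding visc_sub_def K_def by blast
      then show False using Epos by simp
    next
      case False
      then have fr: "x0 \<in> frontier \<Omega>" using x0K op by (simp add: K_def frontier_def interior_open)
      have "min (opE \<Lambda> (\<phi> x0) (g x0) (H x0)) (g x0 \<bullet> outer_normal \<rho> x0) \<le> 0"
        using sub fr C2[of "closure \<Omega>"] phix0 touch unfolding visc_sub_def K_def by blast
      moreover have "g x0 \<bullet> outer_normal \<rho> x0 > 0"
        using normal_pos[OF op cv sd z fr] alpha_pos by (simp add: gx0)
      ultimately show False using Epos by simp
    qed
  qed
  have "u x - C x \<le> c" using x0max x by (simp add: K_def w_def c_def)
  moreover have "C x \<le> k * norm (x - z)" using eps by (simp add: C_def)
  ultimately show ?thesis using \<open>c \<le> u z\<close> by simp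
qed


lemma le_limit_k:
  fixes a b c r :: real
  assumes h: "\<And>k. k > c \<Longrightarrow> a \<le> b + k * r" and r: "r \<ge> 0"
  shows "a \<le> b + c * r"
proof (rule ccontr)
  assume "\<not> a \<le> b + c * r"
  then have g: "a - b - c * r > 0" by simp
  define k where "k = c + (a - b - c * r) / (2 * (r + 1))"
  have "k > c" using g r by (simp add: k_def)
  then have "a \<le> b + k * r" by (rule h)
  also have "\<dots> = b + c * r + (a - b - c * r) * (r / (2 * (r + 1)))" by (simp add: k_def algebra_simps)
  also have "\<dots> < b + c * r + (a - b - c * r) * 1"
    using g r by (intro add_strict_left_mono mult_strict_left_mono) (auto simp: field_simps)
  finally show False by simp
qed

lemma lip_closure:
  fixes \<Omega> :: "'a::euclidean_space set"
  assumes bd: "bounded \<Omega>" and op: "open \<Omega>" and cv: "convex \<Omega>" and sd: "smooth_defining_fun \<Omega> \<rho>"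
    and L: "\<Lambda> \<ge> 0" and cu: "continuous_on (closure \<Omega>) u"
    and sub: "visc_sub \<Lambda> \<Omega> (outer_normal \<rho>) u"
    and P: "\<forall>x\<in>closure \<Omega>. u x \<le> P" and P0: "P \<ge> 0"
    and z: "z \<in> closure \<Omega>" and x: "x \<in> closure \<Omega>"
  shows "u x \<le> u z + \<Lambda> * P * norm (x - z)"
proof -
  have inner: "u x \<le> u y + \<Lambda> * P * norm (x - y)" if y: "y \<in> \<Omega>" for y
    by (rule le_limit_k[OF lip_core[OF bd op cv sd L cu sub P P0 P0 y _ x]]) auto
  have "u z + \<Lambda> * P * norm (x - z) - u x \<ge> 0"
  proof (rule continuous_ge_on_closure[where f="\<lambda>y. u y + \<Lambda> * P * norm (x - y) - u x", OF _ z])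
    show "continuous_on (closure \<Omega>) (\<lambda>y. u y + \<Lambda> * P * norm (x - y) - u x)"
      by (intro continuous_intros cu)
  next
    fix y assume "y \<in> \<Omega>" then show "u y + \<Lambda> * P * norm (x - y) - u x \<ge> 0" using inner by simp
  qed
  then show ?thesis by simp
qed

theorem proposition1:
  fixes \<Omega> :: "'a::euclidean_space set" and \<rho> :: "'a \<Rightarrow> real"
    and u :: "'a \<Rightarrow> real" and \<Lambda> :: real
  assumes "bounded \<Omega>" and "open \<Omega>" and "convex \<Omega>"
    and "smooth_defining_fun \<Omega> \<rho>"
    and "\<Lambda> > 0"
    and "visc_sol \<Lambda> \<Omega> (outer_normal \<rho>) u"
    and "\<not> (\<exists>c. \<forall>x\<in>closure \<Omega>. u x = c)"
  shows "\<Lambda> \<ge> 2 / diameter \<Omega>"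
proof -
  note bd = assms(1) and op = assms(2) and cv = assms(3) and sd = assms(4)
  have L: "\<Lambda> \<ge> 0" using assms(5) by simp
  have cu: "continuous_on (closure \<Omega>) u" and sub: "visc_sub \<Lambda> \<Omega> (outer_normal \<rho>) u"
    and sup: "visc_super \<Lambda> \<Omega> (outer_normal \<rho>) u" using assms(6) unfolding visc_sol_def by auto
  define K where "K = closure \<Omega>"
  have cK: "compact K" using bd by (simp add: K_def compact_closure)
  have neK: "K \<noteq> {}" using assms(7) by (auto simp: K_def)
  obtain x1 where x1: "x1 \<in> K" "\<forall>y\<in>K. u y \<le> u x1"
    using continuous_attains_sup[OF cK neK] cu K_def by blast
  obtain x2 where x2: "x2 \<in> K" "\<forall>y\<in>K. u x2 \<le> u y"
    using continuous_attains_inf[OF cK neK] cu K_def by blast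
  define M where "M = u x1"
  define m where "m = u x2"
  have Mm: "m < M"
  proof (rule ccontr)
    assume "\<not> m < M"
    then have "\<forall>x\<in>closure \<Omega>. u x = M" using x1 x2 by (force simp: K_def M_def m_def)
    then show False using assms(7) by blast
  qed
  define P where "P = max M 0"
  define N where "N = max (-m) 0"
  have A: "u x1 \<le> u x2 + \<Lambda> * P * norm (x1 - x2)"
    by (rule lip_closure[OF bd op cv sd L cu sub _ _ ]) (use x1 x2 in \<open>auto simp: K_def P_def M_def\<close>)
  have cnu: "continuous_on (closure \<Omega>) (\<lambda>x. - u x)" by (intro continuous_intros cu)
  have subn: "visc_sub \<Lambda> \<Omega> (outer_normal \<rho>) (\<lambda>x. - u x)" by (rule super_neg_sub[OF sup])
  have B: "- u x2 \<le> - u x1 + \<Lambda> * N * norm (x2 - x1)"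
    by (rule lip_closure[OF bd op cv sd L cnu subn, of N x1 x2]) (use x1 x2 in \<open>auto simp: K_def N_def m_def\<close>)
  define d where "d = norm (x1 - x2)"
  have d21: "norm (x2 - x1) = d" by (simp add: d_def norm_minus_commute)
  have dD: "d \<le> diameter \<Omega>"
    using diameter_bounded_bound[of K x1 x2] x1 x2 cK compact_imp_bounded diameter_closure[OF bd]
    by (auto simp: K_def d_def dist_norm)
  have d0: "d \<ge> 0" by (simp add: d_def)
  have A': "M - m \<le> \<Lambda> * P * d" using A by (simp add: M_def m_def d_def)
  have B': "M - m \<le> \<Lambda> * N * d" using B d21 by (simp add: M_def m_def)
  have Mpos: "M > 0"
  proof (rule ccontr)
    assume "\<not> M > 0" then have "P = 0" by (simp add: P_def)
    then show False using A' Mm by simp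
  qed
  have mneg: "m < 0"
  proof (rule ccontr)
    assume "\<not> m < 0" then have "N = 0" by (simp add: N_def)
    then show False using B' Mm by simp
  qed
  have "2 * (M - m) \<le> \<Lambda> * d * (M - m)"
    using A' B' Mpos mneg by (simp add: P_def N_def algebra_simps)
  then have "2 * (M - m) \<le> (\<Lambda> * d) * (M - m)" by simp
  then have "2 \<le> \<Lambda> * d" using Mm mult_right_le_imp_le[of 2 "M - m" "\<Lambda> * d"] by simp
  also have "\<dots> \<le> \<Lambda> * diameter \<Omega>" using dD L by (simp add: mult_left_mono)
  finally have two: "2 \<le> \<Lambda> * diameter \<Omega>" .
  then have "diameter \<Omega> > 0" using L by (smt (verit) mult_nonpos_nonpos mult_nonneg_nonpos)
  then show ?thesis using two by (simp add: field_simps)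
qed

end
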